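(* Let $f,g\in H$ have a common fixed point $p\in\mathbb{P}^1$. Then every element of the second derived subgroup $\langle f,g\rangle''$ of the subgroup $\langle f,g\rangle<H$ generated by $f$ and $g$ acts trivially on some neighbourhood of $p$.
   Context: Let $\mathbb{P}^1=\mathbb{P}^1(\mathbb{R})$ with its usual topology (a circle) and the natural action of $\mathrm{PSL}_2(\mathbb{R})$. Let $G$ be the group of homeomorphisms of $\mathbb{P}^1$ which are piecewise in $\mathrm{PSL}_2(\mathbb{R})$ with finitely many pieces, each an interval of $\mathbb{P}^1$. Let $\infty\in\mathbb{P}^1$ be the point corresponding to the first basis vector of $\mathbb{R}^2$ and $H<G$ the stabilizer of $\infty$. For a group $J$, $J''$ denotes $[J',J']$ where $J'=[J,J]$. *)

theory Defs
  imports "HOL-Analysis.Analysis" "HOL-Algebra.Solvable_Groups" "HOL-Algebra.Bij"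
begin

text \<open>Model of P^1(R): the type real option. Some x is the line [x:1];
  None is the line [1:0] spanned by the first basis vector, i.e. infinity.\<close>

type_synonym P1 = "real option"

definition P1inf :: P1 where "P1inf = None"

text \<open>Second affine chart: x maps to the line [1:x].\<close>
definition chart2 :: "real \<Rightarrow> P1" where
  "chart2 x = (if x = 0 then None else Some (1 / x))"

definition P1open :: "P1 set \<Rightarrow> bool" where
  "P1open U \<longleftrightarrow> open (Some -` U) \<and> open (chart2 -` U)"

lemma istopology_P1open: "istopology P1open"
  unfolding istopology_def P1open_def
  by (auto simp: vimage_Int vimage_Union open_Int intro!: open_Union)

definition P1top :: "P1 topology" where
  "P1top = topology P1open"

text \<open>Action of the matrix ((a,b),(c,d)) on P^1: [x:y] maps to [ax+by : cx+dy].\<close>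
definition mobius :: "real \<Rightarrow> real \<Rightarrow> real \<Rightarrow> real \<Rightarrow> P1 \<Rightarrow> P1" where
  "mobius a b c d p = (case p of
      None \<Rightarrow> (if c = 0 then None else Some (a / c))
    | Some x \<Rightarrow> (if c * x + d = 0 then None else Some ((a * x + b) / (c * x + d))))"

definition PSL2 :: "(P1 \<Rightarrow> P1) set" where
  "PSL2 = {mobius a b c d | a b c d. a * d - b * c = 1}"

definition P1interval :: "P1 set \<Rightarrow> bool" where
  "P1interval I \<longleftrightarrow> connectedin P1top I"

definition PPgroup :: "(P1 \<Rightarrow> P1) set" where
  "PPgroup = {f. homeomorphic_map P1top P1top f \<and>
     (\<exists>\<I>. finite \<I> \<and> \<Union>\<I> = UNIV \<and>
        (\<forall>I\<in>\<I>. P1interval I \<and> (\<exists>\<phi>\<in>PSL2. \<forall>x\<in>I. f x = \<phi> x)))}"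

definition Hgroup :: "(P1 \<Rightarrow> P1) set" where
  "Hgroup = {f \<in> PPgroup. f P1inf = P1inf}"

abbreviation SymP1 where "SymP1 \<equiv> BijGroup (UNIV :: P1 set)"

end

theory Submission
  imports Defs
begin

lemma carrier_Sym: "carrier SymP1 = {h. bij h}"
  by (auto simp: BijGroup_def Bij_def)

lemma mult_Sym: "bij h \<Longrightarrow> bij k \<Longrightarrow> h \<otimes>\<^bsub>SymP1\<^esub> k = h \<circ> k"
  by (auto simp: BijGroup_def Bij_def compose_def fun_eq_iff)

lemma one_Sym: "\<one>\<^bsub>SymP1\<^esub> = id"
  by (auto simp: BijGroup_def fun_eq_iff)

lemma inv_Sym: "bij h \<Longrightarrow> m_inv SymP1 h = inv_into UNIV h"
  by (subst inv_BijGroup) (auto simp: Bij_def fun_eq_iff)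

lemma subgroup_SymI:
  assumes "\<And>h. h \<in> K \<Longrightarrow> bij h" "\<And>h k. h \<in> K \<Longrightarrow> k \<in> K \<Longrightarrow> h \<circ> k \<in> K"
    "id \<in> K" "\<And>h. h \<in> K \<Longrightarrow> inv_into UNIV h \<in> K"
  shows "subgroup K SymP1"
  apply (rule subgroup.intro)
  using assms by (auto simp: carrier_Sym mult_Sym one_Sym inv_Sym)


definition io :: "P1 \<Rightarrow> real \<Rightarrow> P1" where
  "io p t = (case p of Some x0 \<Rightarrow> Some (x0 + t) | None \<Rightarrow> (if t = 0 then None else Some (-1/t)))"
definition mob :: "real \<Rightarrow> real \<Rightarrow> real \<Rightarrow> real \<Rightarrow> real" where
  "mob A C D t = A*t/(C*t+D)"
definition gm :: "P1 \<Rightarrow> real filter \<Rightarrow> (P1\<Rightarrow>P1) \<Rightarrow> (real\<Rightarrow>real) \<Rightarrow> bool" where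
  "gm p F h \<phi> \<longleftrightarrow> eventually (\<lambda>t. h (io p t) = io p (\<phi> t)) F"
definition side :: "real filter \<Rightarrow> bool" where
  "side F \<longleftrightarrow> F = at_left 0 \<or> F = at_right 0"

lemma side_le: "side F \<Longrightarrow> F \<le> at 0"
  by (auto simp: side_def at_le)

lemma side_nontriv: "side F \<Longrightarrow> F \<noteq> bot"
  unfolding side_def using trivial_limit_at_left_real[of 0] trivial_limit_at_right_real[of 0] by metis

lemma side_tendsto: "side F \<Longrightarrow> ((\<lambda>t. t) \<longlongrightarrow> 0) F"
  by (auto simp: side_def intro: tendsto_ident_at)

lemma ev_ne: "D \<noteq> 0 \<Longrightarrow> side F \<Longrightarrow> eventually (\<lambda>t::real. C*t+D \<noteq> 0) F"
proof -
  assume "D \<noteq> 0" "side F"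
  have "((\<lambda>t. C*t+D) \<longlongrightarrow> C*0+D) F"
    by (intro tendsto_intros side_tendsto[OF \<open>side F\<close>])
  then show ?thesis using \<open>D \<noteq> 0\<close> by (simp add: tendsto_imp_eventually_ne)
qed

lemma filterlim_mob:
  assumes "A*D = 1" "side F" shows "filterlim (mob A C D) F F"
proof -
  have D: "D \<noteq> 0" using assms by auto
  have t: "((\<lambda>t. mob A C D t) \<longlongrightarrow> A*0/(C*0+D)) F"
    unfolding mob_def using D by (intro tendsto_intros side_tendsto[OF \<open>side F\<close>]) auto
  have "((\<lambda>t. A/(C*t+D)) \<longlongrightarrow> A/(C*0+D)) F"
    using D by (intro tendsto_intros side_tendsto[OF \<open>side F\<close>]) auto
  moreover have "A/D > 0" using assms
    by (metis divide_pos_pos mult_pos_pos not_less_iff_gr_or_eq zero_less_divide_iff zero_less_mult_iff zero_less_one)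
  ultimately have ev: "eventually (\<lambda>t. A/(C*t+D) > 0) F"
    by (simp add: order_tendstoD(1))
  have m: "mob A C D t = t * (A/(C*t+D))" for t by (simp add: mob_def)
  show ?thesis using assms(2) unfolding side_def
  proof
    assume F: "F = at_left 0"
    have "eventually (\<lambda>t::real. t < 0) F" using F by (simp add: eventually_at_filter)
    with ev have "eventually (\<lambda>t. mob A C D t \<in> {..<0} \<and> mob A C D t \<noteq> 0) F"
    proof eventually_elim
      case (elim t)
      have "t * (A/(C*t+D)) < 0" using elim by (intro mult_neg_pos) auto
      then show ?case by (metis m lessThan_iff less_irrefl)
    qed
    then show ?thesis using t F by (simp add: filterlim_at)
  next
    assume F: "F = at_right 0"
    have "eventually (\<lambda>t::real. t > 0) F" using F by (simp add: eventually_at_filter)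
    with ev have "eventually (\<lambda>t. mob A C D t \<in> {0<..} \<and> mob A C D t \<noteq> 0) F"
    proof eventually_elim
      case (elim t)
      have "t * (A/(C*t+D)) > 0" using elim by (intro mult_pos_pos) auto
      then show ?case by (metis m greaterThan_iff less_irrefl)
    qed
    then show ?thesis using t F by (simp add: filterlim_at)
  qed
qed

lemma gm_cong: assumes "gm p F h \<phi>" "eventually (\<lambda>t. \<phi> t = \<psi> t) F" shows "gm p F h \<psi>"
  using assms(2) assms(1)[unfolded gm_def] unfolding gm_def by eventually_elim simp

lemma gm_comp: "gm p F h1 \<phi>1 \<Longrightarrow> gm p F h2 \<phi>2 \<Longrightarrow> filterlim \<phi>2 F F \<Longrightarrow> gm p F (h1\<circ>h2) (\<phi>1\<circ>\<phi>2)"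
  unfolding gm_def
proof -
  assume a: "eventually (\<lambda>t. h1 (io p t) = io p (\<phi>1 t)) F" "eventually (\<lambda>t. h2 (io p t) = io p (\<phi>2 t)) F"
    "filterlim \<phi>2 F F"
  have "eventually (\<lambda>t. h1 (io p (\<phi>2 t)) = io p (\<phi>1 (\<phi>2 t))) F"
    using eventually_compose_filterlim[OF a(1) a(3)] .
  with a(2) show "eventually (\<lambda>t. (h1 \<circ> h2) (io p t) = io p ((\<phi>1 \<circ> \<phi>2) t)) F"
    by eventually_elim auto
qed

lemma div_div_same: "(c::real) \<noteq> 0 \<Longrightarrow> (a/c)/(b/c) = a/b"
  by (cases "b = 0") (simp_all add: field_simps)

lemma mob_comp: "C2*t+D2 \<noteq> 0 \<Longrightarrow> mob A1 C1 D1 (mob A2 C2 D2 t) = mob (A1*A2) (C1*A2+D1*C2) (D1*D2) t"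
  unfolding mob_def
proof -
  assume n: "C2*t+D2 \<noteq> 0"
  have e1: "A1 * (A2 * t / (C2 * t + D2)) = (A1*A2*t)/(C2*t+D2)" by simp
  have e: "C1 * (A2 * t / (C2 * t + D2)) + D1 = ((C1*A2+D1*C2)*t + D1*D2)/(C2*t+D2)"
    using n by (simp add: field_simps)
  show "A1 * (A2 * t / (C2 * t + D2)) / (C1 * (A2 * t / (C2 * t + D2)) + D1) =
    A1 * A2 * t / ((C1 * A2 + D1 * C2) * t + D1 * D2)"
    unfolding e e1 using n by (rule div_div_same)
qed

lemma gm_comp_mob:
  assumes "gm p F h1 (mob A1 C1 D1)" "gm p F h2 (mob A2 C2 D2)" "A2*D2 = 1" "side F"
  shows "gm p F (h1\<circ>h2) (mob (A1*A2) (C1*A2+D1*C2) (D1*D2))"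
proof -
  have "gm p F (h1\<circ>h2) (mob A1 C1 D1 \<circ> mob A2 C2 D2)"
    by (rule gm_comp[OF assms(1,2) filterlim_mob[OF assms(3,4)]])
  moreover have "eventually (\<lambda>t. C2*t+D2 \<noteq> 0) F"
    using assms(3,4) by (intro ev_ne) auto
  moreover have "eventually (\<lambda>t. (mob A1 C1 D1 \<circ> mob A2 C2 D2) t = mob (A1*A2) (C1*A2+D1*C2) (D1*D2) t) F"
    using calculation(2) by eventually_elim (simp add: mob_comp)
  ultimately show ?thesis
    using gm_cong by blast
qed

lemma gm_inv:
  assumes "bij h" "A*D = 1" "gm p F h (mob A C D)" "side F"
  shows "gm p F (inv_into UNIV h) (mob D (-C) A)"
proof -
  have DA: "D*A = 1" using assms(2) by (simp add: mult.commute)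
  have e1: "eventually (\<lambda>t. h (io p (mob D (-C) A t)) = io p (mob A C D (mob D (-C) A t))) F"
    using eventually_compose_filterlim[OF assms(3)[unfolded gm_def] filterlim_mob[OF DA assms(4)]] .
  have e2: "eventually (\<lambda>t. -C*t+A \<noteq> 0) F"
    using DA assms(4) by (intro ev_ne) auto
  from e1 e2 show ?thesis unfolding gm_def
  proof eventually_elim
    case (elim t)
    have "mob A C D (mob D (-C) A t) = t"
      using elim(2) assms(2) by (simp add: mob_comp) (simp add: mob_def mult.commute)
    then have "h (io p (mob D (-C) A t)) = io p t" using elim(1) by simp
    then show ?case using assms(1) by (metis bij_def inv_f_eq)
  qed
qed


lemma openin_P1top: "openin P1top U = P1open U"
  by (simp add: P1top_def topology_inverse' istopology_P1open)

lemma topspace_P1top: "topspace P1top = UNIV"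
  unfolding topspace_def openin_P1top by (auto simp: P1open_def intro!: exI[of _ UNIV])

definition GS :: "P1 \<Rightarrow> (real\<Rightarrow>real\<Rightarrow>real\<Rightarrow>bool) \<Rightarrow> (P1\<Rightarrow>P1) set" where
 "GS p P = {h. bij h \<and> h p = p \<and> (\<forall>F. side F \<longrightarrow> (\<exists>A C D. A*D = 1 \<and> P A C D \<and> gm p F h (mob A C D)))}"

lemma GS_subgroup:
  assumes cl: "\<And>A1 C1 D1 A2 C2 D2. A1*D1 = 1 \<Longrightarrow> A2*D2 = 1 \<Longrightarrow> P A1 C1 D1 \<Longrightarrow> P A2 C2 D2 \<Longrightarrow>
       P (A1*A2) (C1*A2+D1*C2) (D1*D2)"
    and iv: "\<And>A C D. A*D = 1 \<Longrightarrow> P A C D \<Longrightarrow> P D (-C) A" and one: "P 1 0 1"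
  shows "subgroup (GS p P) SymP1"
proof (rule subgroup_SymI)
  show "bij h" if "h \<in> GS p P" for h using that by (simp add: GS_def)
  show "id \<in> GS p P" unfolding GS_def
  proof (intro CollectI conjI allI impI)
    fix F :: "real filter" assume "side F"
    have "gm p F id (mob 1 0 1)" by (simp add: gm_def mob_def)
    then show "\<exists>A C D. A*D = 1 \<and> P A C D \<and> gm p F id (mob A C D)" using one by force
  qed auto
  show "h \<circ> k \<in> GS p P" if hk: "h \<in> GS p P" "k \<in> GS p P" for h k
    unfolding GS_def
  proof (intro CollectI conjI allI impI)
    show "bij (h\<circ>k)" using hk by (auto simp: GS_def bij_comp)
    show "(h\<circ>k) p = p" using hk by (auto simp: GS_def)
    fix F :: "real filter" assume F: "side F"
    obtain A1 C1 D1 where 1: "A1*D1 = 1" "P A1 C1 D1" "gm p F h (mob A1 C1 D1)"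
      using hk(1) F unfolding GS_def by blast
    obtain A2 C2 D2 where 2: "A2*D2 = 1" "P A2 C2 D2" "gm p F k (mob A2 C2 D2)"
      using hk(2) F unfolding GS_def by blast
    have "gm p F (h\<circ>k) (mob (A1*A2) (C1*A2+D1*C2) (D1*D2))"
      by (rule gm_comp_mob[OF 1(3) 2(3) 2(1) F])
    moreover have "(A1*A2)*(D1*D2) = 1" using 1 2
      by (metis mult.assoc mult.commute mult.right_neutral)
    ultimately show "\<exists>A C D. A*D = 1 \<and> P A C D \<and> gm p F (h\<circ>k) (mob A C D)"
      using cl[OF 1(1) 2(1) 1(2) 2(2)] by blast
  qed
  show "inv_into UNIV h \<in> GS p P" if hh: "h \<in> GS p P" for h
    unfolding GS_def
  proof (intro CollectI conjI allI impI)
    have b: "bij h" "h p = p" using hh by (auto simp: GS_def)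
    show "bij (inv_into UNIV h)" using b by (simp add: bij_imp_bij_inv)
    show "inv_into UNIV h p = p" using b by (metis bij_def inv_f_eq)
    fix F :: "real filter" assume F: "side F"
    obtain A C D where 1: "A*D = 1" "P A C D" "gm p F h (mob A C D)"
      using hh F unfolding GS_def by blast
    have "gm p F (inv_into UNIV h) (mob D (-C) A)" by (rule gm_inv[OF b(1) 1(1) 1(3) F])
    moreover have "D*A = 1" using 1 by (simp add: mult.commute)
    ultimately show "\<exists>A C D. A*D = 1 \<and> P A C D \<and> gm p F (inv_into UNIV h) (mob A C D)"
      using iv[OF 1(1,2)] by blast
  qed
qed

lemma GS_comm:
  assumes x: "x \<in> GS p P" and y: "y \<in> GS p P"
    and Q: "\<And>A C D A' C' D'. A*D=1 \<Longrightarrow> A'*D'=1 \<Longrightarrow> P A C D \<Longrightarrow> P A' C' D' \<Longrightarrow>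
       Q (A*A'*D*D') (((C*A'+D*C')*D + D*D'*(-C))*D' + D*D'*A*(-C')) (D*D'*A*A')"
  shows "x \<circ> y \<circ> inv_into UNIV x \<circ> inv_into UNIV y \<in> GS p Q"
  unfolding GS_def
proof (intro CollectI conjI allI impI)
  have b: "bij x" "x p = p" "bij y" "y p = p" using x y by (auto simp: GS_def)
  show "bij (x \<circ> y \<circ> inv_into UNIV x \<circ> inv_into UNIV y)"
    using b by (intro bij_comp bij_imp_bij_inv) auto
  have "inv_into UNIV x p = p" "inv_into UNIV y p = p" using b by (metis bij_def inv_f_eq)+
  then show "(x \<circ> y \<circ> inv_into UNIV x \<circ> inv_into UNIV y) p = p" using b by simp
  fix F :: "real filter" assume F: "side F"
  obtain A C D where 1: "A*D = 1" "P A C D" "gm p F x (mob A C D)"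
    using x F unfolding GS_def by blast
  obtain A' C' D' where 2: "A'*D' = 1" "P A' C' D'" "gm p F y (mob A' C' D')"
    using y F unfolding GS_def by blast
  have DA: "D*A = 1" "D'*A' = 1" using 1 2 by (simp_all add: mult.commute)
  have "gm p F (x \<circ> y \<circ> inv_into UNIV x \<circ> inv_into UNIV y)
     (mob (A*A'*D*D') (((C*A'+D*C')*D + D*D'*(-C))*D' + D*D'*A*(-C')) (D*D'*A*A'))"
    by (intro gm_comp_mob gm_inv 1(3) 2(3) b DA F 1(1) 2(1))
  moreover have "(A*A'*D*D') * (D*D'*A*A') = 1" using 1(1) 2(1)
    by (metis mult.assoc mult.commute mult.right_neutral)
  ultimately show "\<exists>A C D. A*D = 1 \<and> Q A C D \<and> gm p F (x \<circ> y \<circ> inv_into UNIV x \<circ> inv_into UNIV y) (mob A C D)"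
    using Q[OF 1(1) 2(1) 1(2) 2(2)] by blast
qed

definition TT :: "P1 \<Rightarrow> (P1\<Rightarrow>P1) set" where
  "TT p = {h. bij h \<and> (\<exists>U. openin P1top U \<and> p \<in> U \<and> (\<forall>x\<in>U. h x = x))}"

lemma TT_subgroup: "subgroup (TT p) SymP1"
proof (rule subgroup_SymI)
  show "bij h" if "h \<in> TT p" for h using that by (simp add: TT_def)
  show "id \<in> TT p" unfolding TT_def by (auto simp: topspace_P1top intro!: exI[of _ "topspace P1top"])
  show "h \<circ> k \<in> TT p" if hk: "h \<in> TT p" "k \<in> TT p" for h k
  proof -
    obtain U where U: "openin P1top U" "p \<in> U" "\<forall>x\<in>U. h x = x" "bij h" using hk(1) by (auto simp: TT_def)
    obtain V where V: "openin P1top V" "p \<in> V" "\<forall>x\<in>V. k x = x" "bij k" using hk(2) by (auto simp: TT_def)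
    show ?thesis unfolding TT_def using U V
      by (auto intro!: exI[of _ "U \<inter> V"] bij_comp)
  qed
  show "inv_into UNIV h \<in> TT p" if hh: "h \<in> TT p" for h
  proof -
    obtain U where U: "openin P1top U" "p \<in> U" "\<forall>x\<in>U. h x = x" "bij h" using hh by (auto simp: TT_def)
    have "\<forall>x\<in>U. inv_into UNIV h x = x" using U by (metis bij_def inv_f_eq)
    then show ?thesis unfolding TT_def using U by (auto simp: bij_imp_bij_inv)
  qed
qed


lemma open_inv_vimage: "open V \<Longrightarrow> open {x::real. x \<noteq> 0 \<and> 1/x \<in> V}"
proof -
  assume V: "open V"
  have c: "continuous_on (-{0}) (\<lambda>x::real. 1/x)" by (intro continuous_intros) auto
  have "open ((\<lambda>x::real. 1/x) -` V \<inter> (-{0}))"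
    using c V continuous_on_open_vimage[of "-{0}" "\<lambda>x::real. 1/x"] by auto
  moreover have "{x::real. x \<noteq> 0 \<and> 1/x \<in> V} = (\<lambda>x::real. 1/x) -` V \<inter> (-{0})" by auto
  ultimately show ?thesis by simp
qed

lemma openin_Some: "open V \<Longrightarrow> openin P1top (Some ` V)"
proof -
  assume V: "open V"
  have "Some -` (Some ` V) = V" by auto
  moreover have "chart2 -` (Some ` V) = {x. x \<noteq> 0 \<and> 1/x \<in> V}"
    by (auto simp: chart2_def split: if_splits)
  ultimately show ?thesis using V open_inv_vimage[OF V]
    by (simp add: openin_P1top P1open_def)
qed

lemma openin_compl_Some:
  assumes C: "closed C" "bounded C" shows "openin P1top (- Some ` C)"
proof -
  obtain M where M: "M > 0" "\<forall>y\<in>C. norm y \<le> M" using C(2) bounded_pos by blast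
  have "Some -` (- Some ` C) = - C" by auto
  moreover have "chart2 -` (- Some ` C) = ball 0 (1/M) \<union> {x. x \<noteq> 0 \<and> 1/x \<in> -C}"
  proof (rule Set.set_eqI, rule iffI)
    fix x assume x: "x \<in> chart2 -` (- Some ` C)"
    show "x \<in> ball 0 (1/M) \<union> {x. x \<noteq> 0 \<and> 1/x \<in> -C}"
      using x M(1) by (cases "x = 0") (auto simp: chart2_def)
  next
    fix x assume x: "x \<in> ball 0 (1/M) \<union> {x. x \<noteq> 0 \<and> 1/x \<in> -C}"
    show "x \<in> chart2 -` (- Some ` C)"
    proof (cases "x = 0")
      case True then show ?thesis by (auto simp: chart2_def)
    next
      case False
      have "1/x \<notin> C"
      proof (cases "x \<in> ball 0 (1/M)")
        case True
        then have "\<bar>x\<bar> < 1/M" by simp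
        then have "\<bar>1/x\<bar> > M" using False M(1)
          using less_imp_inverse_less[of "\<bar>x\<bar>" "1/M"] by (simp add: abs_divide inverse_eq_divide)
        then show ?thesis using M(2) by force
      next
        case False then show ?thesis using x by auto
      qed
      then show ?thesis using False by (auto simp: chart2_def)
    qed
  qed
  moreover have "open {x::real. x \<noteq> 0 \<and> 1/x \<in> -C}" using C(1) by (intro open_inv_vimage) auto
  ultimately show ?thesis using C(1)
    by (simp add: openin_P1top P1open_def open_Un open_Compl)
qed

lemma eventually_io:
  assumes U: "openin P1top U" "p \<in> U" shows "eventually (\<lambda>t. io p t \<in> U) (at 0)"
proof (cases p)
  case None
  have "open (chart2 -` U)" "0 \<in> chart2 -` U" using U None
    by (auto simp: openin_P1top P1open_def chart2_def)
  then obtain e where e: "e > 0" "ball 0 e \<subseteq> chart2 -` U" by (meson open_contains_ball)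
  show ?thesis unfolding eventually_at
  proof (intro exI[of _ e] conjI allI ballI impI)
    fix t :: real assume t: "t \<noteq> 0 \<and> dist t 0 < e"
    then have "-t \<in> ball 0 e" by simp
    then have "-t \<in> chart2 -` U" using e(2) by blast
    then have "chart2 (-t) \<in> U" by simp
    then show "io p t \<in> U" using t None by (simp add: chart2_def io_def)
  qed (use e in auto)
next
  case (Some x0)
  have "open (Some -` U)" "x0 \<in> Some -` U" using U Some
    by (auto simp: openin_P1top P1open_def)
  then obtain e where e: "e > 0" "ball x0 e \<subseteq> Some -` U" by (meson open_contains_ball)
  show ?thesis unfolding eventually_at
  proof (intro exI[of _ e] conjI allI ballI impI)
    fix t :: real assume t: "t \<noteq> 0 \<and> dist t 0 < e"
    then have "x0 + t \<in> ball x0 e" by (simp add: dist_norm)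
    then show "io p t \<in> U" using e Some by (auto simp: io_def)
  qed (use e in auto)
qed

lemma io_nbhd:
  assumes r: "r > 0"
  shows "\<exists>V. openin P1top V \<and> p \<in> V \<and> (\<forall>y. io p y \<in> V \<longleftrightarrow> \<bar>y\<bar> < r) \<and> (\<forall>x\<in>V. \<exists>y. x = io p y)"
proof (cases p)
  case (Some x0)
  show ?thesis
  proof (intro exI[of _ "Some ` ball x0 r"] conjI allI ballI)
    show "openin P1top (Some ` ball x0 r)" by (intro openin_Some) auto
    show "p \<in> Some ` ball x0 r" using Some r by auto
    show "io p y \<in> Some ` ball x0 r \<longleftrightarrow> \<bar>y\<bar> < r" for y
      using Some by (auto simp: io_def dist_norm)
    show "\<exists>y. x = io p y" if "x \<in> Some ` ball x0 r" for x
      using that Some by (auto simp: io_def intro!: exI[of _ "the x - x0"])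
  qed
next
  case None
  show ?thesis
  proof (intro exI[of _ "- Some ` cball 0 (1/r)"] conjI allI ballI)
    show "openin P1top (- Some ` cball 0 (1/r))" by (intro openin_compl_Some) auto
    show "p \<in> - Some ` cball 0 (1/r)" using None by auto
    show "io p y \<in> - Some ` cball 0 (1/r) \<longleftrightarrow> \<bar>y\<bar> < r" for y
    proof (cases "y = 0")
      case True then show ?thesis using None r by (auto simp: io_def)
    next
      case False
      have "io p y \<in> - Some ` cball 0 (1/r) \<longleftrightarrow> \<bar>1/y\<bar> > 1/r"
        using None False by (auto simp: io_def)
      also have "\<dots> \<longleftrightarrow> \<bar>y\<bar> < r" using False r
        using inverse_less_iff_less[of r "\<bar>y\<bar>"] by (simp add: abs_divide inverse_eq_divide)
      finally show ?thesis .
    qed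
    show "\<exists>y. x = io p y" if "x \<in> - Some ` cball 0 (1/r)" for x
    proof (cases x)
      case None then show ?thesis using \<open>p = None\<close> by (auto simp: io_def intro!: exI[of _ 0])
    next
      case (Some z)
      then have "z \<noteq> 0" using that r by auto
      then show ?thesis using Some \<open>p = None\<close> by (auto simp: io_def intro!: exI[of _ "-1/z"])
    qed
  qed
qed


definition ee :: "P1 \<Rightarrow> real \<Rightarrow> real" where
  "ee p t = (case p of Some x0 \<Rightarrow> x0 + t | None \<Rightarrow> -1/t)"

lemma io_ee: "t \<noteq> 0 \<Longrightarrow> io p t = Some (ee p t)"
  by (cases p) (auto simp: io_def ee_def)

lemma ee_mono: "a < b \<Longrightarrow> (0 < a \<or> b < 0) \<Longrightarrow> ee p a < ee p b"
proof (cases p)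
  case None
  assume ab: "a < b" "0 < a \<or> b < 0"
  have "inverse b < inverse a" using ab less_imp_inverse_less less_imp_inverse_less_neg by blast
  then show ?thesis using None by (simp add: ee_def inverse_eq_divide)
qed (auto simp: ee_def)

lemma arc:
  assumes I: "connectedin P1top I" and svu: "s < v" "v < u"
    and w: "(0 < s \<and> u < w) \<or> (w < s \<and> u < 0)"
    and nI: "io p s \<notin> I" "io p u \<notin> I" and inI: "io p v \<in> I" "io p w \<in> I"
  shows False
proof -
  have nz: "s \<noteq> 0" "u \<noteq> 0" "v \<noteq> 0" "w \<noteq> 0" using svu w by auto
  define \<alpha> where "\<alpha> = ee p s"
  define \<beta> where "\<beta> = ee p u"
  define E1 where "E1 = Some ` {\<alpha><..<\<beta>}"
  define E2 where "E2 = - Some ` {\<alpha>..\<beta>}"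
  have o1: "openin P1top E1" unfolding E1_def by (intro openin_Some) auto
  have o2: "openin P1top E2" unfolding E2_def by (intro openin_compl_Some) auto
  have sa: "io p s = Some \<alpha>" "io p u = Some \<beta>" using nz by (auto simp: io_ee \<alpha>_def \<beta>_def)
  have cov: "I \<subseteq> E1 \<union> E2"
  proof
    fix x assume x: "x \<in> I"
    show "x \<in> E1 \<union> E2"
    proof (cases "x \<in> E2")
      case False
      then obtain y where y: "x = Some y" "\<alpha> \<le> y" "y \<le> \<beta>" unfolding E2_def by auto
      have "y \<noteq> \<alpha>" "y \<noteq> \<beta>" using x y nI sa by auto
      then show ?thesis using y unfolding E1_def by auto
    qed simp
  qed
  have dis: "E1 \<inter> E2 \<inter> I = {}" unfolding E1_def E2_def by auto
  have v1: "\<alpha> < ee p v" "ee p v < \<beta>" unfolding \<alpha>_def \<beta>_def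
    using svu w by (auto intro!: ee_mono)
  have "io p v \<in> E1" using v1 nz by (simp add: io_ee E1_def)
  then have ne1: "E1 \<inter> I \<noteq> {}" using inI by auto
  have "ee p w < \<alpha> \<or> \<beta> < ee p w" unfolding \<alpha>_def \<beta>_def
    using svu w by (auto intro!: ee_mono)
  then have "io p w \<in> E2" using nz by (auto simp: io_ee E2_def)
  then have ne2: "E2 \<inter> I \<noteq> {}" using inI by auto
  show False using I o1 o2 cov dis ne1 ne2 unfolding connectedin by blast
qed

lemma dich:
  assumes I: "connectedin P1top I" and F: "side F"
  shows "eventually (\<lambda>t. io p t \<in> I) F \<or> eventually (\<lambda>t. io p t \<notin> I) F"
proof (rule ccontr)
  assume c: "\<not> ?thesis"
  show False using F unfolding side_def
  proof
    assume F: "F = at_right 0"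
    have A: "\<forall>b>0. \<exists>y>0. y < b \<and> io p y \<notin> I" and B: "\<forall>b>0. \<exists>y>0. y < b \<and> io p y \<in> I"
      using c unfolding F eventually_at_right_field by auto
    obtain t1 where t1: "t1 > 0" "io p t1 \<in> I" using B by (meson zero_less_one)
    obtain t2 where t2: "t2 > 0" "t2 < t1" "io p t2 \<notin> I" using A t1 by blast
    obtain t3 where t3: "t3 > 0" "t3 < t2" "io p t3 \<in> I" using B t2 by blast
    obtain t4 where t4: "t4 > 0" "t4 < t3" "io p t4 \<notin> I" using A t3 by blast
    show False using arc[OF I t4(2) t3(2) _ t4(3) t2(3) t3(3) t1(2)] t4 t2 by auto
  next
    assume F: "F = at_left 0"
    have A: "\<forall>b<0. \<exists>y>b. y < 0 \<and> io p y \<notin> I" and B: "\<forall>b<0. \<exists>y>b. y < 0 \<and> io p y \<in> I"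
      using c unfolding F eventually_at_left_field by auto
    obtain t1 where t1: "t1 < 0" "io p t1 \<in> I" using B by (meson neg_less_0_iff_less zero_less_one)
    obtain t2 where t2: "t2 > t1" "t2 < 0" "io p t2 \<notin> I" using A t1 by blast
    obtain t3 where t3: "t3 > t2" "t3 < 0" "io p t3 \<in> I" using B t2 by blast
    obtain t4 where t4: "t4 > t3" "t4 < 0" "io p t4 \<notin> I" using A t3 by blast
    show False using arc[OF I t3(1) t4(1) _ t2(3) t4(3) t3(3) t1(2)] t4 t2 by auto
  qed
qed

lemma piece:
  assumes "finite \<I>" "\<Union>\<I> = UNIV" "\<forall>I\<in>\<I>. connectedin P1top I" "side F"
  shows "\<exists>I\<in>\<I>. eventually (\<lambda>t. io p t \<in> I) F"
proof (rule ccontr)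
  assume "\<not> ?thesis"
  then have "\<forall>I\<in>\<I>. eventually (\<lambda>t. io p t \<notin> I) F" using dich assms(3,4) by blast
  then have "eventually (\<lambda>t. \<forall>I\<in>\<I>. io p t \<notin> I) F" using assms(1) by (simp add: eventually_ball_finite)
  then have "eventually (\<lambda>t. False) F"
  proof (rule eventually_mono)
    fix t assume "\<forall>I\<in>\<I>. io p t \<notin> I"
    moreover have "io p t \<in> \<Union>\<I>" using assms(2) by simp
    ultimately show False by blast
  qed
  then show False using side_nontriv[OF assms(4)] by simp
qed


lemma div_div_same0: "(k::real) \<noteq> 0 \<Longrightarrow> (X/k)/(Y/k) = X/Y"
  by (cases "Y = 0") (simp_all add: field_simps)

lemma mobius_comp:
  assumes "a*d - b*c \<noteq> 0" "a'*d' - b'*c' \<noteq> 0"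
  shows "mobius a b c d (mobius a' b' c' d' z) =
         mobius (a*a' + b*c') (a*b' + b*d') (c*a' + d*c') (c*b' + d*d') z"
proof (cases z)
  case None
  show ?thesis
  proof (cases "c' = 0")
    case True
    then have "a' \<noteq> 0" using assms(2) by auto
    then show ?thesis using None True by (simp add: mobius_def)
  next
    case False
    have e: "c * a' / c' + d = (c*a' + d*c')/c'" using False by (simp add: field_simps)
    have e2: "a * a' / c' + b = (a*a' + b*c')/c'" using False by (simp add: field_simps)
    have dd: "(X/c')/(Y/c') = X/Y" for X Y using False by (cases "Y = 0") (simp_all add: field_simps)
    show ?thesis using None False by (simp add: mobius_def e e2 dd)
  qed
next
  case (Some x)
  show ?thesis
  proof (cases "c'*x + d' = 0")
    case True
    have "a'*d' - b'*c' = a'*(c'*x + d') - c'*(a'*x + b')" by (simp add: algebra_simps)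
    then have nz: "a'*x + b' \<noteq> 0" using True assms(2) by auto
    have E: "(c*a' + d*c') * x + (c*b' + d*d') = c * (a'*x+b')"
    proof -
      have "(c*a' + d*c') * x + (c*b' + d*d') = c * (a'*x + b') + d*(c'*x + d')" by (simp add: algebra_simps)
      then show ?thesis using True by simp
    qed
    have E2: "(a*a' + b*c') * x + (a*b' + b*d') = a * (a'*x+b')"
    proof -
      have "(a*a' + b*c') * x + (a*b' + b*d') = a * (a'*x+b') + b*(c'*x+d')" by (simp add: algebra_simps)
      then show ?thesis using True by simp
    qed
    have L: "mobius a' b' c' d' z = None" using Some True by (simp add: mobius_def)
    show ?thesis
    proof (cases "c = 0")
      case True
      then show ?thesis using L Some E by (simp add: mobius_def)
    next
      case False
      have "a * (a'*x+b') / (c * (a'*x+b')) = a / c" using nz by simp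
      then show ?thesis using L Some E E2 False nz by (simp add: mobius_def)
    qed
  next
    case False
    have E: "c * (a'*x + b') / (c'*x + d') + d = ((c*a' + d*c') * x + (c*b' + d*d'))/(c'*x + d')"
      using False by (simp add: field_simps)
    have E2: "a * (a'*x + b') / (c'*x + d') + b = ((a*a' + b*c') * x + (a*b' + b*d'))/(c'*x + d')"
      using False by (simp add: field_simps)
    have dd: "(X/(c'*x + d'))/(Y/(c'*x + d')) = X/Y" for X Y
      using False by (rule div_div_same0)
    show ?thesis using Some False by (simp add: mobius_def E E2 dd)
  qed
qed


lemma io_mobius: "\<exists>a0 b0 c0 d0. a0*d0 - b0*c0 = 1 \<and> (\<forall>t. io p t = mobius a0 b0 c0 d0 (Some t))"
proof (cases p)
  case None
  show ?thesis
    by (rule exI[of _ 0], rule exI[of _ "-1"], rule exI[of _ 1], rule exI[of _ 0])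
       (auto simp: io_def mobius_def None)
next
  case (Some x0)
  show ?thesis
    by (rule exI[of _ 1], rule exI[of _ x0], rule exI[of _ 0], rule exI[of _ 1])
       (auto simp: io_def mobius_def Some)
qed

lemma ev_side_ne0: "side F \<Longrightarrow> eventually (\<lambda>t::real. t \<noteq> 0) F"
  by (auto simp: side_def eventually_at_filter)

lemma gen_germ:
  assumes fH: "f \<in> Hgroup" and fp: "f p = p" and F: "side F"
  shows "\<exists>A C D. A*D = 1 \<and> gm p F f (mob A C D)"
proof -
  have hom: "homeomorphic_map P1top P1top f" using fH by (simp add: Hgroup_def PPgroup_def)
  obtain \<I> where I: "finite \<I>" "\<Union>\<I> = UNIV"
      "\<forall>I\<in>\<I>. P1interval I \<and> (\<exists>\<phi>\<in>PSL2. \<forall>x\<in>I. f x = \<phi> x)"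
    using fH by (auto simp: Hgroup_def PPgroup_def)
  obtain I0 where I0: "I0 \<in> \<I>" "eventually (\<lambda>t. io p t \<in> I0) F"
  proof -
    have conn: "\<forall>I\<in>\<I>. connectedin P1top I" using I(3) by (auto simp: P1interval_def)
    show ?thesis using piece[OF I(1,2) conn F, of p] that by blast
  qed
  obtain a b c d where abcd: "a*d - b*c = 1" "\<forall>x\<in>I0. f x = mobius a b c d x"
    using I(3) I0(1) by (auto simp: PSL2_def)
  obtain a0 b0 c0 d0 where m0: "a0*d0 - b0*c0 = 1" "\<forall>t. io p t = mobius a0 b0 c0 d0 (Some t)"
    using io_mobius by blast
  define p1 where "p1 = a*a0 + b*c0"
  define p2 where "p2 = a*b0 + b*d0"
  define p3 where "p3 = c*a0 + d*c0"
  define p4 where "p4 = c*b0 + d*d0"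
  define A where "A = d0*p1 - b0*p3"
  define B where "B = d0*p2 - b0*p4"
  define C where "C = -c0*p1 + a0*p3"
  define D where "D = -c0*p2 + a0*p4"
  have "A*D - B*C = (a0*d0-b0*c0)*(p1*p4 - p2*p3)"
    unfolding A_def B_def C_def D_def by (simp add: algebra_simps)
  moreover have "p1*p4 - p2*p3 = (a*d-b*c)*(a0*d0-b0*c0)"
    unfolding p1_def p2_def p3_def p4_def by (simp add: algebra_simps)
  ultimately have detN: "A*D - B*C = 1" using abcd(1) m0(1) by simp
  have comp1: "mobius a b c d (io p t) = mobius p1 p2 p3 p4 (Some t)" for t
  proof -
    have "io p t = mobius a0 b0 c0 d0 (Some t)" using m0(2) by blast
    then show ?thesis unfolding p1_def p2_def p3_def p4_def
      using mobius_comp[of a d b c a0 d0 b0 c0] abcd(1) m0(1) by simp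
  qed
  have mat: "a0*A + b0*C = p1" "a0*B + b0*D = p2" "c0*A + d0*C = p3" "c0*B + d0*D = p4"
  proof -
    have "a0*A + b0*C = (a0*d0-b0*c0)*p1" "a0*B + b0*D = (a0*d0-b0*c0)*p2"
      "c0*A + d0*C = (a0*d0-b0*c0)*p3" "c0*B + d0*D = (a0*d0-b0*c0)*p4"
      unfolding A_def B_def C_def D_def by (simp_all add: algebra_simps)
    then show "a0*A + b0*C = p1" "a0*B + b0*D = p2" "c0*A + d0*C = p3" "c0*B + d0*D = p4"
      using m0(1) by simp_all
  qed
  have comp2: "mobius a0 b0 c0 d0 (mobius A B C D z) = mobius p1 p2 p3 p4 z" for z
    using mobius_comp[of a0 d0 b0 c0 A D B C z] m0(1) detN mat by simp
  define \<psi> where "\<psi> t = (A*t + B)/(C*t + D)" for t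
  have evden: "eventually (\<lambda>t. C*t + D \<noteq> 0) F"
  proof (cases "D = 0")
    case False then show ?thesis by (rule ev_ne[OF _ F])
  next
    case True
    then have "C \<noteq> 0" using detN by auto
    then show ?thesis using ev_side_ne0[OF F] True by (auto elim: eventually_mono)
  qed
  have ev1: "eventually (\<lambda>t. f (io p t) = io p (\<psi> t)) F"
    using I0(2) evden
  proof eventually_elim
    case (elim t)
    have "f (io p t) = mobius a b c d (io p t)" using abcd(2) elim(1) by blast
    also have "\<dots> = mobius a0 b0 c0 d0 (mobius A B C D (Some t))" by (simp add: comp1 comp2)
    also have "mobius A B C D (Some t) = Some (\<psi> t)" using elim(2) by (simp add: mobius_def \<psi>_def add.commute mult.commute)
    finally show ?case by (simp add: m0(2))
  qed
  have cont: "continuous_map P1top P1top f" using hom by (rule homeomorphic_imp_continuous_map)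
  have lim: "(\<psi> \<longlongrightarrow> 0) F"
    unfolding tendsto_iff
  proof (intro allI impI)
    fix r :: real assume r: "r > 0"
    obtain V where V: "openin P1top V" "p \<in> V" "\<forall>y. io p y \<in> V \<longleftrightarrow> \<bar>y\<bar> < r"
      using io_nbhd[OF r] by blast
    have "openin P1top {x \<in> topspace P1top. f x \<in> V}" using cont V(1) by (simp add: continuous_map_def)
    then have "openin P1top (f -` V)" by (simp add: topspace_P1top vimage_def)
    moreover have "p \<in> f -` V" using fp V(2) by simp
    ultimately have "eventually (\<lambda>t. io p t \<in> f -` V) (at 0)" by (rule eventually_io)
    then have "eventually (\<lambda>t. io p t \<in> f -` V) F" by (rule filter_leD[OF side_le[OF F]])
    then show "eventually (\<lambda>t. dist (\<psi> t) 0 < r) F" using ev1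
      by eventually_elim (use V(3) in auto)
  qed
  have "((\<lambda>t. \<psi> t * (C*t + D)) \<longlongrightarrow> 0 * (C*0 + D)) F"
    by (intro tendsto_intros lim side_tendsto[OF F])
  then have l1: "((\<lambda>t. \<psi> t * (C*t + D)) \<longlongrightarrow> 0) F" by simp
  have "eventually (\<lambda>t. \<psi> t * (C*t + D) = A*t + B) F" using evden
    by eventually_elim (simp add: \<psi>_def)
  then have l2: "((\<lambda>t. A*t + B) \<longlongrightarrow> 0) F" by (rule Lim_transform_eventually[OF l1])
  have "((\<lambda>t. A*t + B) \<longlongrightarrow> A*0 + B) F" by (intro tendsto_intros side_tendsto[OF F])
  then have B0: "B = 0" using tendsto_unique[OF side_nontriv[OF F] l2] by simp
  have AD: "A*D = 1" using detN B0 by simp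
  have pe: "\<psi> = mob A C D" by (rule ext) (simp add: \<psi>_def mob_def B0)
  have gmf: "gm p F f (mob A C D)"
    using ev1 by (simp only: gm_def pe)
  show ?thesis using AD gmf by (intro exI[of _ A] exI[of _ C] exI[of _ D] conjI)
qed


lemma derived_set_sub:
  assumes "H \<subseteq> GS p P"
    and "\<And>x y. x \<in> GS p P \<Longrightarrow> y \<in> GS p P \<Longrightarrow> x \<circ> y \<circ> inv_into UNIV x \<circ> inv_into UNIV y \<in> K"
  shows "derived_set SymP1 H \<subseteq> K"
proof
  fix z assume "z \<in> derived_set SymP1 H"
  then obtain h1 h2 where h: "h1 \<in> H" "h2 \<in> H"
    "z = h1 \<otimes>\<^bsub>SymP1\<^esub> h2 \<otimes>\<^bsub>SymP1\<^esub> m_inv SymP1 h1 \<otimes>\<^bsub>SymP1\<^esub> m_inv SymP1 h2" by blast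
  have g: "h1 \<in> GS p P" "h2 \<in> GS p P" using h assms(1) by auto
  then have b: "bij h1" "bij h2" by (auto simp: GS_def)
  have "z = h1 \<circ> h2 \<circ> inv_into UNIV h1 \<circ> inv_into UNIV h2"
    using b by (simp add: h(3) mult_Sym inv_Sym bij_comp bij_imp_bij_inv)
  then show "z \<in> K" using assms(2)[OF g] by simp
qed

lemma io0: "io p 0 = p" by (cases p) (auto simp: io_def)

lemma GS2_TT: "GS p (\<lambda>A C D. A = 1 \<and> C = 0 \<and> D = 1) \<subseteq> TT p"
proof
  fix h assume h: "h \<in> GS p (\<lambda>A C D. A = 1 \<and> C = 0 \<and> D = 1)"
  have b: "bij h" "h p = p" using h by (auto simp: GS_def)
  have ev: "eventually (\<lambda>t. h (io p t) = io p t) F" if "side F" for F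
  proof -
    have "gm p F h (mob 1 0 1)" using h that by (auto simp: GS_def)
    then show ?thesis by (simp add: gm_def mob_def)
  qed
  have "eventually (\<lambda>t. h (io p t) = io p t) (at 0)"
    unfolding eventually_at_split using ev by (auto simp: side_def)
  then obtain d where d: "d > 0" "\<forall>t. t \<noteq> 0 \<and> dist t 0 < d \<longrightarrow> h (io p t) = io p t"
    unfolding eventually_at by auto
  obtain V where V: "openin P1top V" "p \<in> V" "\<forall>y. io p y \<in> V \<longleftrightarrow> \<bar>y\<bar> < d" "\<forall>x\<in>V. \<exists>y. x = io p y"
    using io_nbhd[OF d(1)] by blast
  have "\<forall>x\<in>V. h x = x"
  proof
    fix x assume x: "x \<in> V"
    then obtain y where y: "x = io p y" using V(4) by blast
    then have "\<bar>y\<bar> < d" using V(3) x by blast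
    then show "h x = x" using d(2) y b(2) io0[of p] by (cases "y = 0") auto
  qed
  then show "h \<in> TT p" using V(1,2) b(1) by (auto simp: TT_def)
qed

theorem lemma1:
  fixes f g :: "P1 \<Rightarrow> P1" and p :: P1
  assumes "f \<in> Hgroup" and "g \<in> Hgroup"
    and "f p = p" and "g p = p"
  shows "\<forall>h \<in> derived SymP1 (derived SymP1 (generate SymP1 {f, g})).
           \<exists>U. openin P1top U \<and> p \<in> U \<and> (\<forall>x\<in>U. h x = x)"
proof -
  interpret grp: group SymP1 by (rule group_BijGroup)
  define P0 where "P0 = (\<lambda>(A::real) (C::real) (D::real). True)"
  define P1 where "P1 = (\<lambda>(A::real) (C::real) (D::real). A = 1 \<and> D = 1)"
  define P2 where "P2 = (\<lambda>(A::real) (C::real) (D::real). A = 1 \<and> C = 0 \<and> D = 1)"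
  have sg0: "subgroup (GS p P0) SymP1" by (rule GS_subgroup) (auto simp: P0_def)
  have sg1: "subgroup (GS p P1) SymP1" by (rule GS_subgroup) (auto simp: P1_def)
  have inH: "k \<in> GS p P0" if "k \<in> Hgroup" "k p = p" for k
  proof -
    have hom: "homeomorphic_map P1top P1top k" using that by (simp add: Hgroup_def PPgroup_def)
    have "bij k" using homeomorphic_imp_injective_map[OF hom] homeomorphic_imp_surjective_map[OF hom]
      by (simp add: topspace_P1top bij_def)
    then show ?thesis using gen_germ[OF that] that(2) by (auto simp: GS_def P0_def)
  qed
  have G0: "generate SymP1 {f, g} \<subseteq> GS p P0"
    by (rule grp.generate_subgroup_incl[OF _ sg0]) (use inH assms in auto)
  have "derived_set SymP1 (generate SymP1 {f, g}) \<subseteq> GS p P1"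
  proof (rule derived_set_sub[OF G0])
    fix x y assume "x \<in> GS p P0" "y \<in> GS p P0"
    then show "x \<circ> y \<circ> inv_into UNIV x \<circ> inv_into UNIV y \<in> GS p P1"
    proof (rule GS_comm)
      fix A C D A' C' D' :: real assume "A*D = 1" "A'*D' = 1"
      then show "P1 (A*A'*D*D') (((C*A'+D*C')*D + D*D'*(-C))*D' + D*D'*A*(-C')) (D*D'*A*A')"
        unfolding P1_def by (metis mult.assoc mult.commute mult.right_neutral)
    qed
  qed
  then have G1: "derived SymP1 (generate SymP1 {f, g}) \<subseteq> GS p P1"
    unfolding derived_def by (rule grp.generate_subgroup_incl[OF _ sg1])
  have "derived_set SymP1 (derived SymP1 (generate SymP1 {f, g})) \<subseteq> TT p"
  proof (rule derived_set_sub[OF G1])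
    fix x y assume "x \<in> GS p P1" "y \<in> GS p P1"
    then have "x \<circ> y \<circ> inv_into UNIV x \<circ> inv_into UNIV y \<in> GS p P2"
    proof (rule GS_comm)
      fix A C D A' C' D' :: real assume "P1 A C D" "P1 A' C' D'"
      then show "P2 (A*A'*D*D') (((C*A'+D*C')*D + D*D'*(-C))*D' + D*D'*A*(-C')) (D*D'*A*A')"
        unfolding P1_def P2_def by simp
    qed
    then show "x \<circ> y \<circ> inv_into UNIV x \<circ> inv_into UNIV y \<in> TT p"
      using GS2_TT unfolding P2_def by blast
  qed
  then have "derived SymP1 (derived SymP1 (generate SymP1 {f, g})) \<subseteq> TT p"
    unfolding derived_def[of _ "derived SymP1 _"] by (rule grp.generate_subgroup_incl[OF _ TT_subgroup])
  then show ?thesis by (auto simp: TT_def)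
qed

end
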